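(* Let $p\geq1$ and let $l,y,l',y'\in D(\mathbb{R}^+,\mathbb{R}^d)$ be such that $l_0\leq y_0$ and $l'_0\leq y'_0$. Let $(x,k)=SP_l(y)$ and $(x',k')=SP_{l'}(y')$. Then for any $T\in\mathbb{R}^+$, \[ V_p(x-x')_T\leq (d+1)V_p(y-y')_T+d|y_0-y'_0|+dV_p(l-l')_T+d|l_0-l'_0| \] and \[ V_p(k-k')_T\leq dV_p(y-y')_T+d|y_0-y'_0|+dV_p(l-l')_T+d|l_0-l'_0|. \]
   Context: $\mathbb{R}^+=[0,\infty)$; $D(\mathbb{R}^+,\mathbb{R}^d)$ is the space of càdlàg functions $\mathbb{R}^+\to\mathbb{R}^d$. For such $x$, $v_p(x)_{[a,b]}=\sup\sum_{i=1}^n|x_{t_i}-x_{t_{i-1}}|^p$ over subdivisions $a=t_0<\dots<t_n=b$ ($|\cdot|$ Euclidean norm), $V_p(x)_{[a,b]}=(v_p(x)_{[a,b]})^{1/p}$ and $V_p(x)_T=V_p(x)_{[0,T]}$. For vectors, $u\leq v$ means $u^i\leq v^i$ for all components; for functions, $x\leq x'$ means $x_t\leq x'_t$ for all $t$. Skorokhod problem: given $y,l\in D(\mathbb{R}^+,\mathbb{R}^d)$ with $l_0\leq y_0$, a pair $(x,k)$ of elements of $D(\mathbb{R}^+,\mathbb{R}^d)$ is a solution of the Skorokhod problem associated with $y$ and lower barrier $l$, written $(x,k)=SP_l(y)$, if (i) $x_t=y_t+k_t\geq l_t$ for all $t\in\mathbb{R}^+$; (ii) $k_0=0$, each component $k^i$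 is nondecreasing and $\int_0^t(x^i_s-l^i_s)\,dk^i_s=0$ for all $t$ and $i=1,\dots,d$. *)

theory Defs
  imports "HOL-Analysis.Analysis" "HOL-Probability.Probability"
begin

text \<open>Functions on R+ with values in R^d are modelled as real => real^'n, d = CARD('n);
only their values on [0,inf) matter.  The norm on real^'n is the Euclidean norm.\<close>

definition cadlag :: "(real \<Rightarrow> real^'n) \<Rightarrow> bool" where
  "cadlag f \<longleftrightarrow>
     (\<forall>t\<ge>0. (f \<longlongrightarrow> f t) (at_right t)) \<and>
     (\<forall>t>0. \<exists>L. (f \<longlongrightarrow> L) (at_left t))"

definition pvar :: "real \<Rightarrow> (real \<Rightarrow> real^'n) \<Rightarrow> real \<Rightarrow> real \<Rightarrow> ereal" where
  "pvar p x a b = Sup { ereal (\<Sum>i<n. norm (x (t (Suc i)) - x (t i)) powr p) | n t.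
      t 0 = a \<and> t n = b \<and> (\<forall>i<n. t i < t (Suc i)) }"

definition Vp :: "real \<Rightarrow> (real \<Rightarrow> real^'n) \<Rightarrow> real \<Rightarrow> real \<Rightarrow> ereal" where
  "Vp p x a b = (if pvar p x a b = \<infinity> then \<infinity> else ereal (real_of_ereal (pvar p x a b) powr (1/p)))"

text \<open>The integral
  int_0^t (x^i - l^i) dk^i is the Lebesgue-Stieltjes integral over (0,t] w.r.t. the
  nondecreasing right-continuous function k^i (no atom at 0 since k_0 = 0); the integrand
  is nonnegative, so it is taken as a nonnegative integral.\<close>
definition SP :: "(real \<Rightarrow> real^'n) \<Rightarrow> (real \<Rightarrow> real^'n) \<Rightarrow> (real \<Rightarrow> real^'n) \<Rightarrow> (real \<Rightarrow> real^'n) \<Rightarrow> bool" where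
  "SP l y x k \<longleftrightarrow>
     cadlag x \<and> cadlag k \<and>
     (\<forall>t\<ge>0. x t = y t + k t \<and> (\<forall>i. l t $ i \<le> x t $ i)) \<and>
     k 0 = 0 \<and>
     (\<forall>i. mono_on {0..} (\<lambda>t. k t $ i)) \<and>
     (\<forall>i. \<forall>t\<ge>0. (\<integral>\<^sup>+ s. ennreal (x s $ i - l s $ i) * indicator {0<..t} s
          \<partial>(interval_measure (\<lambda>s. k (max s 0) $ i))) = 0)"

end

theory Submission
  imports Defs
begin


lemma powr_le_self: "0 \<le> (x::real) \<Longrightarrow> x \<le> 1 \<Longrightarrow> 1 \<le> p \<Longrightarrow> x powr p \<le> x"
  using powr_mono'[of 1 p x] by simp

lemma powr_superadd:
  fixes a b p :: real
  assumes "0 \<le> a" "0 \<le> b" "1 \<le> p"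
  shows "a powr p + b powr p \<le> (a + b) powr p"
proof (cases "a + b = 0")
  case True then have "a = 0" "b = 0" using assms by auto
  then show ?thesis using assms by simp
next
  case False
  then have s: "a + b > 0" using assms by simp
  have "a powr p = (a+b) powr p * (a/(a+b)) powr p"
    using s assms by (simp add: powr_divide)
  also have "\<dots> \<le> (a+b) powr p * (a/(a+b))"
    using s assms by (intro mult_left_mono powr_le_self) auto
  finally have 1: "a powr p \<le> (a+b) powr p * (a/(a+b))" .
  have "b powr p = (a+b) powr p * (b/(a+b)) powr p"
    using s assms by (simp add: powr_divide)
  also have "\<dots> \<le> (a+b) powr p * (b/(a+b))"
    using s assms by (intro mult_left_mono powr_le_self) auto
  finally have 2: "b powr p \<le> (a+b) powr p * (b/(a+b))" .
  have "(a+b) powr p * (a/(a+b)) + (a+b) powr p * (b/(a+b)) = (a+b) powr p"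
    using s by (simp add: add_divide_distrib[symmetric] flip: distrib_left)
  then show ?thesis using 1 2 by linarith
qed

lemma powr_convex0:
  fixes a1 b1 lam p :: real
  assumes "0 \<le> a1" "0 \<le> b1" "0 \<le> lam" "lam \<le> 1" "1 \<le> p"
  shows "(lam*a1 + (1-lam)*b1) powr p \<le> lam * a1 powr p + (1-lam) * b1 powr p"
proof -
  have pc: "x powr p \<le> x" if "0 \<le> x" "x \<le> 1" for x using powr_le_self that assms by simp
  show ?thesis
  proof (cases "a1 = 0")
    case True
    then have "(lam*a1 + (1-lam)*b1) powr p = (1-lam) powr p * b1 powr p" using assms by (simp add: powr_mult)
    also have "\<dots> \<le> (1-lam) * b1 powr p" using assms pc[of "1-lam"] by (intro mult_right_mono) auto
    finally show ?thesis using True assms by simp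
  next
    case a1: False
    show ?thesis
    proof (cases "b1 = 0")
      case True
      then have "(lam*a1 + (1-lam)*b1) powr p = lam powr p * a1 powr p" using assms by (simp add: powr_mult)
      also have "\<dots> \<le> lam * a1 powr p" using assms pc[of "lam"] by (intro mult_right_mono) auto
      finally show ?thesis using True assms by simp
    next
      case False
      have "convex_on {0<..} (\<lambda>x. x powr p)" using powr_convex assms by simp
      from convex_onD[OF this, of "1-lam" a1 b1] assms a1 False
      show ?thesis by (simp add: algebra_simps)
    qed
  qed
qed

definition nrm :: "real \<Rightarrow> (nat \<Rightarrow> real) \<Rightarrow> nat \<Rightarrow> real" where
  "nrm p a N = (\<Sum>s<N. a s powr p) powr (1/p)"

lemma nrm_nonneg: "0 \<le> nrm p a N" by (simp add: nrm_def)

lemma nrm_pow: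
  assumes "\<forall>s<N. 0 \<le> a s" "p > 0"
  shows "nrm p a N powr p = (\<Sum>s<N. a s powr p)"
  using assms by (simp add: nrm_def powr_powr sum_nonneg)

lemma powr_inv_le_iff:
  fixes X B p :: real
  assumes "p > 0" "0 \<le> B" "0 \<le> X"
  shows "X powr (1/p) \<le> B \<longleftrightarrow> X \<le> B powr p"
proof
  assume "X powr (1/p) \<le> B"
  then have "(X powr (1/p)) powr p \<le> B powr p" using assms by (intro powr_mono2) auto
  then show "X \<le> B powr p" using assms by (simp add: powr_powr)
next
  assume "X \<le> B powr p"
  then have "X powr (1/p) \<le> (B powr p) powr (1/p)" using assms by (intro powr_mono2) auto
  then show "X powr (1/p) \<le> B" using assms by (simp add: powr_powr)
qed

lemma nrm_le_iff:
  assumes "p > 0" "0 \<le> B"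
  shows "nrm p a N \<le> B \<longleftrightarrow> (\<Sum>s<N. a s powr p) \<le> B powr p"
  unfolding nrm_def using assms by (intro powr_inv_le_iff) (auto simp: sum_nonneg)

lemma nrm_mono:
  assumes "\<forall>s<N. 0 \<le> c s \<and> c s \<le> a s" "p > 0"
  shows "nrm p c N \<le> nrm p a N"
  unfolding nrm_def using assms
  by (intro powr_mono2 sum_mono) (auto simp: sum_nonneg intro!: powr_mono2)

lemma minkowski:
  assumes "\<forall>s<N. 0 \<le> a s \<and> 0 \<le> b s" "p \<ge> 1"
  shows "nrm p (\<lambda>s. a s + b s) N \<le> nrm p a N + nrm p b N"
proof -
  define A where "A = nrm p a N"
  define B where "B = nrm p b N"
  have A0: "A \<ge> 0" "B \<ge> 0" by (simp_all add: A_def B_def nrm_nonneg)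
  have Ap: "A powr p = (\<Sum>s<N. a s powr p)" "B powr p = (\<Sum>s<N. b s powr p)"
    unfolding A_def B_def using assms by (simp_all add: nrm_pow)
  show ?thesis
  proof (cases "A = 0")
    case True
    then have "(\<Sum>s<N. a s powr p) = 0" using Ap by simp
    then have "\<forall>s<N. a s powr p = 0" using sum_nonneg_eq_0_iff[of "{..<N}" "\<lambda>s. a s powr p"] by auto
    then have "\<forall>s<N. a s = 0" by simp
    then have "nrm p (\<lambda>s. a s + b s) N = nrm p b N" unfolding nrm_def by (intro arg_cong2[where f="(powr)"] sum.cong) auto
    then show ?thesis using True A_def by simp
  next
    case An: False
    show ?thesis
    proof (cases "B = 0")
      case True
      then have "(\<Sum>s<N. b s powr p) = 0" using Ap by simp
      then have "\<forall>s<N. b s powr p = 0" using sum_nonneg_eq_0_iff[of "{..<N}" "\<lambda>s. b s powr p"] by auto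
      then have "\<forall>s<N. b s = 0" by simp
      then have "nrm p (\<lambda>s. a s + b s) N = nrm p a N" unfolding nrm_def by (intro arg_cong2[where f="(powr)"] sum.cong) auto
      then show ?thesis using True B_def by simp
    next
      case Bn: False
      have Ap0: "A > 0" "B > 0" using An Bn A0 by auto
      define lam where "lam = A / (A + B)"
      have lam: "0 \<le> lam" "lam \<le> 1" "1 - lam = B / (A+B)" using Ap0 by (auto simp: lam_def field_simps)
      have "(\<Sum>s<N. ((a s + b s)/(A+B)) powr p) \<le> (\<Sum>s<N. lam * (a s / A) powr p + (1-lam) * (b s / B) powr p)"
      proof (rule sum_mono)
        fix s assume "s \<in> {..<N}"
        then have ab: "0 \<le> a s" "0 \<le> b s" using assms by auto
        have "lam * (a s / A) + (1-lam) * (b s / B) = a s/(A+B) + b s/(A+B)"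
          using Ap0 by (simp add: lam_def field_simps)
        then have "(a s + b s)/(A+B) = lam * (a s / A) + (1-lam) * (b s / B)"
          by (simp add: add_divide_distrib)
        then show "((a s + b s)/(A+B)) powr p \<le> lam * (a s / A) powr p + (1-lam) * (b s / B) powr p"
          using powr_convex0[of "a s / A" "b s / B" lam p] ab Ap0 lam assms by simp
      qed
      also have "\<dots> = lam * ((\<Sum>s<N. a s powr p) / A powr p) + (1-lam) * ((\<Sum>s<N. b s powr p) / B powr p)"
        using Ap0 assms by (simp add: sum.distrib sum_distrib_left sum_divide_distrib powr_divide)
      also have "\<dots> = 1" using Ap0 by (simp flip: Ap)
      finally have 1: "(\<Sum>s<N. ((a s + b s)/(A+B)) powr p) \<le> 1" .
      have "(\<Sum>s<N. ((a s + b s)/(A+B)) powr p) = (\<Sum>s<N. (a s + b s) powr p) / (A+B) powr p"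
        using Ap0 assms by (simp add: sum_divide_distrib powr_divide)
      with 1 have "(\<Sum>s<N. (a s + b s) powr p) \<le> (A+B) powr p" using Ap0 by (simp add: divide_le_eq_1)
      then show ?thesis using nrm_le_iff[of p "A+B" "\<lambda>s. a s + b s" N] Ap0 assms A_def B_def by simp
    qed
  qed
qed

lemma minkowski_le:
  assumes "\<forall>s<N. 0 \<le> a s \<and> 0 \<le> b s \<and> 0 \<le> c s \<and> c s \<le> a s + b s" "p \<ge> 1"
  shows "nrm p c N \<le> nrm p a N + nrm p b N"
  using nrm_mono[of N c "\<lambda>s. a s + b s" p] minkowski[of N a b p] assms by auto

lemma minkowski_sum:
  assumes "finite I" "\<forall>i\<in>I. \<forall>s<N. 0 \<le> c i s" "p \<ge> 1"
  shows "nrm p (\<lambda>s. \<Sum>i\<in>I. c i s) N \<le> (\<Sum>i\<in>I. nrm p (c i) N)"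
  using assms
proof (induction I rule: finite_induct)
  case empty then show ?case by (simp add: nrm_def)
next
  case (insert i I)
  have "nrm p (\<lambda>s. \<Sum>j\<in>insert i I. c j s) N = nrm p (\<lambda>s. c i s + (\<Sum>j\<in>I. c j s)) N"
    using insert by simp
  also have "\<dots> \<le> nrm p (c i) N + nrm p (\<lambda>s. \<Sum>j\<in>I. c j s) N"
    using insert by (intro minkowski) (auto intro: sum_nonneg)
  also have "\<dots> \<le> nrm p (c i) N + (\<Sum>j\<in>I. nrm p (c j) N)"
    using insert by auto
  finally show ?case using insert by simp
qed



definition chs :: "real \<Rightarrow> (real \<Rightarrow> 'a::real_normed_vector) \<Rightarrow> (nat \<Rightarrow> real) \<Rightarrow> nat \<Rightarrow> real" where
  "chs p g q N = (\<Sum>s<N. norm (g (q (Suc s)) - g (q s)) powr p)"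

lemma chs_nonneg: "0 \<le> chs p g q N" by (simp add: chs_def sum_nonneg)

lemma chain_ext:
  "(\<forall>s<N. q s \<le> q (Suc s)) \<longrightarrow> (\<exists>n t. t 0 = q 0 \<and> t n = q N \<and> (\<forall>i<n. t i < t (Suc i)) \<and> chs p g q N \<le> chs p g t n)"
proof (induction N)
  case 0
  show ?case by (rule impI, rule exI[of _ 0], rule exI[of _ q]) (simp add: chs_def)
next
  case (Suc N)
  show ?case
  proof
    assume h: "\<forall>s<Suc N. q s \<le> q (Suc s)"
    then obtain n t where t: "t 0 = q 0" "t n = q N" "\<forall>i<n. t i < t (Suc i)" "chs p g q N \<le> chs p g t n"
      using Suc by auto
    show "\<exists>n t. t 0 = q 0 \<and> t n = q (Suc N) \<and> (\<forall>i<n. t i < t (Suc i)) \<and> chs p g q (Suc N) \<le> chs p g t n"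
    proof (cases "q (Suc N) = q N")
      case True
      then have "chs p g q (Suc N) = chs p g q N" by (simp add: chs_def)
      then show ?thesis using t True by metis
    next
      case False
      then have lt: "q N < q (Suc N)" using h by (simp add: less_le)
      define t' where "t' = t(Suc n := q (Suc N))"
      have e: "chs p g t' n = chs p g t n" unfolding chs_def t'_def by (intro sum.cong) auto
      have "chs p g t' (Suc n) = chs p g t n + norm (g (q (Suc N)) - g (q N)) powr p"
        using e t by (simp add: chs_def t'_def)
      moreover have "chs p g q (Suc N) = chs p g q N + norm (g (q (Suc N)) - g (q N)) powr p"
        by (simp add: chs_def)
      moreover have "\<forall>i<Suc n. t' i < t' (Suc i)"
        using t lt by (auto simp: t'_def less_Suc_eq)
      moreover have "t' 0 = q 0" "t' (Suc n) = q (Suc N)" using t by (auto simp: t'_def)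
      ultimately show ?thesis using t by (metis add_le_cancel_right)
    qed
  qed
qed

lemma chain_le_pvar:
  assumes "a \<le> b" "q 0 = a" "\<forall>s<N. q s \<le> q (Suc s)" "q N \<le> b"
  shows "ereal (chs p g q N) \<le> pvar p g a b"
proof -
  obtain n t where t: "t 0 = a" "t n = q N" "\<forall>i<n. t i < t (Suc i)" "chs p g q N \<le> chs p g t n"
    using chain_ext[of N q p g] assms by auto
  have mem: "ereal (chs p g t' n') \<le> pvar p g a b" if "t' 0 = a" "t' n' = b" "\<forall>i<n'. t' i < t' (Suc i)" for t' n'
    unfolding pvar_def chs_def by (rule Sup_upper) (use that in blast)
  show ?thesis
  proof (cases "q N = b")
    case True
    then show ?thesis using mem[of t n] t by (meson ereal_less_eq(3) order_trans)
  next
    case False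
    then have lt: "t n < b" using assms t by simp
    define t' where "t' = t(Suc n := b)"
    have e: "chs p g t' n = chs p g t n" unfolding chs_def t'_def by (intro sum.cong) auto
    have "chs p g t' (Suc n) = chs p g t n + norm (g b - g (t n)) powr p"
      using e by (simp add: chs_def t'_def)
    then have "chs p g t n \<le> chs p g t' (Suc n)" by simp
    moreover have "\<forall>i<Suc n. t' i < t' (Suc i)"
      using t lt by (auto simp: t'_def less_Suc_eq)
    moreover have "t' 0 = a" "t' (Suc n) = b" using t by (auto simp: t'_def)
    ultimately show ?thesis using mem[of t' "Suc n"] t by (meson ereal_less_eq(3) order_trans)
  qed
qed

lemma pvar_nonneg: "a \<le> b \<Longrightarrow> 0 \<le> pvar p g a b"
  using chain_le_pvar[of a b "\<lambda>_. a" 0 p g] by (simp add: chs_def zero_ereal_def)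

lemma Vp_chain:
  assumes "p > 0" "a \<le> b" "Vp p g a b = ereal V" "q 0 = a" "\<forall>s<N. q s \<le> q (Suc s)" "q N \<le> b"
  shows "chs p g q N \<le> V powr p"
proof -
  have ni: "pvar p g a b \<noteq> \<infinity>" using assms(3) by (auto simp: Vp_def split: if_splits)
  have c: "ereal (chs p g q N) \<le> pvar p g a b" using chain_le_pvar assms by blast
  obtain r where r: "pvar p g a b = ereal r" using ni c by (cases "pvar p g a b") auto
  have r0: "0 \<le> r" using pvar_nonneg[OF assms(2), of p g] r by simp
  have V: "V = r powr (1/p)" using assms(3) r by (simp add: Vp_def)
  have "V powr p = r" using V r0 assms(1) by (simp add: powr_powr)
  then show ?thesis using c r by simp
qed

lemma Vp_le:
  assumes "p > 0" "a \<le> b" "0 \<le> B"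
    and h: "\<And>n t. t 0 = a \<Longrightarrow> t n = b \<Longrightarrow> (\<forall>i<n. t i < t (Suc i)) \<Longrightarrow> chs p g t n \<le> B powr p"
  shows "Vp p g a b \<le> ereal B"
proof -
  have "pvar p g a b \<le> ereal (B powr p)"
    unfolding pvar_def by (rule Sup_least) (use h in \<open>auto simp: chs_def\<close>)
  moreover have "0 \<le> pvar p g a b" using pvar_nonneg[OF assms(2)] .
  ultimately obtain r where r: "pvar p g a b = ereal r" "0 \<le> r" "r \<le> B powr p"
    by (cases "pvar p g a b") auto
  have "r powr (1/p) \<le> (B powr p) powr (1/p)" using r assms by (intro powr_mono2) auto
  also have "\<dots> = B" using assms by (simp add: powr_powr)
  finally show ?thesis using r by (simp add: Vp_def)
qed

lemma Vp_cases: "Vp p g a b = \<infinity> \<or> (\<exists>V. Vp p g a b = ereal V)"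
  by (auto simp: Vp_def)



definition btw :: "real \<Rightarrow> real \<Rightarrow> real \<Rightarrow> bool" where
  "btw a x b \<longleftrightarrow> (a \<le> x \<and> x \<le> b) \<or> (b \<le> x \<and> x \<le> a)"

definition Gs :: "real \<Rightarrow> (nat \<Rightarrow> real) \<Rightarrow> nat \<Rightarrow> real" where
  "Gs p g n = (\<Sum>j<n. \<bar>g (Suc j) - g j\<bar> powr p)"

definition Inv :: "real \<Rightarrow> (nat \<Rightarrow> real) \<Rightarrow> (nat \<Rightarrow> real) \<Rightarrow> nat \<Rightarrow> bool" where
  "Inv p g C n \<longleftrightarrow> (\<exists>m e js. m \<le> n \<and> e 0 = g 0 \<and> (\<forall>s. 1 \<le> s \<and> s \<le> m \<longrightarrow> e s = C (js s) \<and> js s < n)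
     \<and> (\<forall>s. 1 \<le> s \<and> s < m \<longrightarrow> js s < js (Suc s))
     \<and> ((m = 0 \<and> g n = g 0 \<and> Gs p g n = 0) \<or>
        (\<exists>m0. m = Suc m0 \<and> btw (e m0) (g n) (e (Suc m0)) \<and> Gs p g n \<le> Gs p e m0 + \<bar>g n - e m0\<bar> powr p)))"

lemma Gs_upd: "k \<ge> m \<Longrightarrow> Gs p (e(Suc k := v)) m = Gs p e m"
  unfolding Gs_def by (intro sum.cong) auto

lemma InvI2:
  "m \<le> n \<Longrightarrow> e 0 = g 0 \<Longrightarrow> (\<forall>s. 1 \<le> s \<and> s \<le> m \<longrightarrow> e s = C (js s) \<and> js s < n) \<Longrightarrow>
   (\<forall>s. 1 \<le> s \<and> s < m \<longrightarrow> js s < js (Suc s)) \<Longrightarrow> m = Suc m0 \<Longrightarrow>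
   btw (e m0) (g n) (e (Suc m0)) \<Longrightarrow> Gs p g n \<le> Gs p e m0 + \<bar>g n - e m0\<bar> powr p \<Longrightarrow> Inv p g C n"
  unfolding Inv_def by blast

lemma InvI0: fixes e g C :: "nat \<Rightarrow> real" assumes "e 0 = g 0" "g n = g 0" "Gs p g n = 0" shows "Inv p g C n"
  unfolding Inv_def
  apply (rule exI[where x="0::nat"])
  apply (rule exI[where x=e])
  apply (rule exI[where x="\<lambda>_::nat. 0::nat"])
  using assms by simp

lemma Inv_step:
  assumes p: "p \<ge> 1" and I: "Inv p g C n"
    and H: "(g n < g (Suc n) \<longrightarrow> g (Suc n) \<le> C n) \<and> (g (Suc n) < g n \<longrightarrow> C n \<le> g (Suc n))"
  shows "Inv p g C (Suc n)"
proof -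
  obtain m e js where I1: "m \<le> n" "e 0 = g 0" "\<forall>s. 1 \<le> s \<and> s \<le> m \<longrightarrow> e s = C (js s) \<and> js s < n"
     "\<forall>s. 1 \<le> s \<and> s < m \<longrightarrow> js s < js (Suc s)"
     and I2: "(m = 0 \<and> g n = g 0 \<and> Gs p g n = 0) \<or>
        (\<exists>m0. m = Suc m0 \<and> btw (e m0) (g n) (e (Suc m0)) \<and> Gs p g n \<le> Gs p e m0 + \<bar>g n - e m0\<bar> powr p)"
    using I unfolding Inv_def by blast
  define D where "D = g (Suc n) - g n"
  have GS: "Gs p g (Suc n) = Gs p g n + \<bar>D\<bar> powr p" by (simp add: Gs_def D_def)
  show ?thesis
  proof (cases "D = 0")
    case True
    then have "Gs p g (Suc n) = Gs p g n" "g (Suc n) = g n" using GS by (auto simp: D_def)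
    then have E: "Gs p g (Suc n) = Gs p g n" "g (Suc n) = g n" by auto
    have C1: "\<forall>s. 1 \<le> s \<and> s \<le> m \<longrightarrow> e s = C (js s) \<and> js s < Suc n"
      using I1(3) less_SucI by blast
    have m1: "m \<le> Suc n" using I1(1) by simp
    from I2 show ?thesis
    proof
      assume "m = 0 \<and> g n = g 0 \<and> Gs p g n = 0"
      then show ?thesis using InvI0[of e g "Suc n" p C] I1(2) E by simp
    next
      assume "\<exists>m0. m = Suc m0 \<and> btw (e m0) (g n) (e (Suc m0)) \<and> Gs p g n \<le> Gs p e m0 + \<bar>g n - e m0\<bar> powr p"
      then obtain m0 where "m = Suc m0" "btw (e m0) (g n) (e (Suc m0))" "Gs p g n \<le> Gs p e m0 + \<bar>g n - e m0\<bar> powr p"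
        by blast
      then show ?thesis using InvI2[of m "Suc n" e g C js m0 p, OF m1 I1(2) C1 I1(4)] E by simp
    qed
  next
    case Dn: False
    show ?thesis
    proof (cases "m = 0")
      case True
      with I2 have g0: "g n = g 0" "Gs p g n = 0" by auto
      define e' where "e' = e(Suc 0 := C n)"
      define js' where "js' = js(Suc 0 := n)"
      have "btw (e' 0) (g (Suc n)) (e' (Suc 0))"
        using H Dn g0 I1(2) unfolding btw_def e'_def D_def by auto
      moreover have "Gs p g (Suc n) \<le> Gs p e' 0 + \<bar>g (Suc n) - e' 0\<bar> powr p"
        using GS g0 I1(2) by (simp add: Gs_def e'_def D_def)
      moreover have "\<forall>s. 1 \<le> s \<and> s \<le> Suc 0 \<longrightarrow> e' s = C (js' s) \<and> js' s < Suc n"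
        by (simp add: e'_def js'_def le_Suc_eq)
      moreover have "\<forall>s. 1 \<le> s \<and> s < Suc 0 \<longrightarrow> js' s < js' (Suc s)" by simp
      moreover have "e' 0 = g 0" using I1 by (simp add: e'_def)
      moreover have "Suc 0 \<le> Suc n" by simp
      ultimately show ?thesis using InvI2[of "Suc 0" "Suc n" e' g C js' 0 p] by simp
    next
      case False
      then obtain m0 where m0: "m = Suc m0" "btw (e m0) (g n) (e (Suc m0))" "Gs p g n \<le> Gs p e m0 + \<bar>g n - e m0\<bar> powr p"
        using I2 False by blast
      define a where "a = e m0"
      define b where "b = e (Suc m0)"
      define x where "x = g n"
      define x' where "x' = g (Suc n)"
      have btw_ab: "btw a x b" using m0 by (simp add: a_def b_def x_def)
      have G0: "Gs p g (Suc n) \<le> Gs p e m0 + \<bar>x - a\<bar> powr p + \<bar>D\<bar> powr p" using GS m0 by (simp add: a_def x_def)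
      have Dx: "D = x' - x" by (simp add: D_def x_def x'_def)
      have jsn: "js (Suc m0) < n" using spec[OF I1(3), of "Suc m0"] m0(1) by simp
      have "D > 0 \<or> D < 0" using Dn by auto
      then have "((D > 0 \<and> a \<le> x) \<or> (D < 0 \<and> x \<le> a)) \<or> ((D > 0 \<and> x < a) \<or> (D < 0 \<and> a < x))"
        by auto
      then consider (rep) "(D > 0 \<and> a \<le> x) \<or> (D < 0 \<and> x \<le> a)" | (app) "(D > 0 \<and> x < a) \<or> (D < 0 \<and> a < x)"
        by blast
      then show ?thesis
      proof cases
        case rep
        define e' where "e' = e(Suc m0 := C n)"
        define js' where "js' = js(Suc m0 := n)"
        have Cn: "(D > 0 \<longrightarrow> x' \<le> C n) \<and> (D < 0 \<longrightarrow> C n \<le> x')" using H by (auto simp: D_def x_def x'_def)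
        have bt: "btw (e' m0) (g (Suc n)) (e' (Suc m0))"
          using rep Cn Dx by (auto simp: btw_def e'_def a_def x'_def)
        have "\<bar>x - a\<bar> powr p + \<bar>D\<bar> powr p \<le> (\<bar>x - a\<bar> + \<bar>D\<bar>) powr p" using powr_superadd p by simp
        also have "\<bar>x - a\<bar> + \<bar>D\<bar> = \<bar>x' - e' m0\<bar>" using rep Dx by (auto simp: e'_def a_def)
        finally have G1: "Gs p g (Suc n) \<le> Gs p e' m0 + \<bar>g (Suc n) - e' m0\<bar> powr p"
          using G0 Gs_upd[of m0 m0 p e "C n"] by (simp add: e'_def x'_def)
        have C1: "\<forall>s. 1 \<le> s \<and> s \<le> m \<longrightarrow> e' s = C (js' s) \<and> js' s < Suc n"
          using I1 by (auto simp: e'_def js'_def m0(1))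
        have O1: "\<forall>s. 1 \<le> s \<and> s < m \<longrightarrow> js' s < js' (Suc s)"
          using I1 jsn by (auto simp: js'_def m0(1) less_Suc_eq)
        have e0: "e' 0 = g 0" using I1 by (simp add: e'_def)
        have "m \<le> Suc n" using I1 by simp
        from InvI2[OF this e0 C1 O1 m0(1) bt G1] show ?thesis .
      next
        case app
        define e' where "e' = e(Suc (Suc m0) := C n)"
        define js' where "js' = js(Suc (Suc m0) := n)"
        have Cn: "(D > 0 \<longrightarrow> x' \<le> C n) \<and> (D < 0 \<longrightarrow> C n \<le> x')" using H by (auto simp: D_def x_def x'_def)
        have bx: "(D > 0 \<longrightarrow> b \<le> x) \<and> (D < 0 \<longrightarrow> x \<le> b)" using app btw_ab by (auto simp: btw_def)
        have bt: "btw (e' (Suc m0)) (g (Suc n)) (e' (Suc (Suc m0)))"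
          using app Cn Dx bx by (auto simp: btw_def e'_def b_def x'_def)
        have "\<bar>x - a\<bar> powr p \<le> \<bar>b - a\<bar> powr p" using app bx p by (intro powr_mono2) auto
        moreover have "\<bar>D\<bar> powr p \<le> \<bar>x' - b\<bar> powr p" using app bx Dx p by (intro powr_mono2) auto
        moreover have "Gs p e' (Suc m0) = Gs p e m0 + \<bar>b - a\<bar> powr p"
          using Gs_upd[of "Suc m0" "Suc m0" p e "C n"] by (simp add: e'_def Gs_def a_def b_def)
        ultimately have G1: "Gs p g (Suc n) \<le> Gs p e' (Suc m0) + \<bar>g (Suc n) - e' (Suc m0)\<bar> powr p"
          using G0 by (simp add: e'_def x'_def b_def)
        have C1: "\<forall>s. 1 \<le> s \<and> s \<le> Suc m \<longrightarrow> e' s = C (js' s) \<and> js' s < Suc n"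
          using I1 by (auto simp: e'_def js'_def m0(1) le_Suc_eq)
        have O1: "\<forall>s. 1 \<le> s \<and> s < Suc m \<longrightarrow> js' s < js' (Suc s)"
          using I1 jsn by (auto simp: js'_def m0(1) less_Suc_eq)
        have e0: "e' 0 = g 0" using I1 by (simp add: e'_def)
        have "Suc m \<le> Suc n" using I1 by simp
        from InvI2[OF this e0 C1 O1 _ bt G1] m0(1) show ?thesis by simp
      qed
    qed
  qed
qed

lemma Inv_all:
  assumes "p \<ge> 1"
  shows "(\<forall>j<n. (g j < g (Suc j) \<longrightarrow> g (Suc j) \<le> C j) \<and> (g (Suc j) < g j \<longrightarrow> C j \<le> g (Suc j))) \<longrightarrow> Inv p g C n"
proof (induction n)
  case 0
  show ?case unfolding Inv_def by (auto simp: Gs_def)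
next
  case (Suc n)
  then show ?case using Inv_step[OF assms] by auto
qed

lemma exact_chain:
  assumes "p \<ge> 1" "\<forall>j<n. (g j < g (Suc j) \<longrightarrow> g (Suc j) \<le> C j) \<and> (g (Suc j) < g j \<longrightarrow> C j \<le> g (Suc j))"
  shows "\<exists>m e js. m \<le> n \<and> e 0 = g 0 \<and> (\<forall>s. 1 \<le> s \<and> s \<le> m \<longrightarrow> e s = C (js s) \<and> js s < n)
     \<and> (\<forall>s. 1 \<le> s \<and> s < m \<longrightarrow> js s < js (Suc s)) \<and> Gs p g n \<le> Gs p e m"
proof -
  obtain m e js where I1: "m \<le> n" "e 0 = g 0" "\<forall>s. 1 \<le> s \<and> s \<le> m \<longrightarrow> e s = C (js s) \<and> js s < n"
     "\<forall>s. 1 \<le> s \<and> s < m \<longrightarrow> js s < js (Suc s)"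
     and I2: "(m = 0 \<and> g n = g 0 \<and> Gs p g n = 0) \<or>
        (\<exists>m0. m = Suc m0 \<and> btw (e m0) (g n) (e (Suc m0)) \<and> Gs p g n \<le> Gs p e m0 + \<bar>g n - e m0\<bar> powr p)"
  proof -
    have "Inv p g C n" using Inv_all[OF assms(1)] assms(2) by simp
    then show ?thesis using that unfolding Inv_def by blast
  qed
  have "Gs p g n \<le> Gs p e m"
  proof (cases "m = 0")
    case True then show ?thesis using I2 by (simp add: Gs_def)
  next
    case False
    then obtain m0 where m0: "m = Suc m0" "btw (e m0) (g n) (e (Suc m0))" "Gs p g n \<le> Gs p e m0 + \<bar>g n - e m0\<bar> powr p"
      using I2 by auto
    have "\<bar>g n - e m0\<bar> powr p \<le> \<bar>e (Suc m0) - e m0\<bar> powr p"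
      using m0(2) assms(1) by (intro powr_mono2) (auto simp: btw_def)
    then show ?thesis using m0 by (simp add: Gs_def)
  qed
  then show ?thesis
    apply -
    apply (rule exI[where x=m])
    apply (rule exI[where x=e])
    apply (rule exI[where x=js])
    using I1 by simp
qed



lemma t_mono:
  assumes "\<forall>i<n. (t::nat\<Rightarrow>real) i < t (Suc i)"
  shows "i \<le> j \<Longrightarrow> j \<le> n \<Longrightarrow> t i \<le> t j"
proof (induction j)
  case 0 then show ?case by simp
next
  case (Suc j)
  show ?case
  proof (cases "i = Suc j")
    case True then show ?thesis by simp
  next
    case False
    then have "i \<le> j" "j < n" using Suc.prems by auto
    then show ?thesis using Suc.IH assms by (meson less_imp_le order.trans Suc_leD less_imp_le_nat)
  qed
qed

lemma CE:
  fixes f W :: "real \<Rightarrow> real" and t :: "nat \<Rightarrow> real"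
  assumes p: "p \<ge> 1" and t0: "t 0 = 0" and tn: "t n = T" and tinc: "\<forall>i<n. t i < t (Suc i)"
    and f0: "f 0 = 0"
    and H: "\<And>j \<epsilon>. j < n \<Longrightarrow> \<epsilon> > 0 \<Longrightarrow>
        (f (t j) < f (t (Suc j)) \<longrightarrow> (\<exists>u. t j < u \<and> u \<le> t (Suc j) \<and> f (t (Suc j)) \<le> W u + \<epsilon>)) \<and>
        (f (t (Suc j)) < f (t j) \<longrightarrow> (\<exists>u. t j < u \<and> u \<le> t (Suc j) \<and> W u - \<epsilon> \<le> f (t (Suc j))))"
    and V: "V \<ge> 0"
    and HB: "\<And>q N. q 0 = 0 \<Longrightarrow> (\<forall>s<N. q s \<le> q (Suc s)) \<Longrightarrow> q N \<le> T \<Longrightarrow>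
        nrm p (\<lambda>s. \<bar>W (q (Suc s)) - W (q s)\<bar>) N \<le> V"
  shows "nrm p (\<lambda>j. \<bar>f (t (Suc j)) - f (t j)\<bar>) n \<le> \<bar>W 0\<bar> + V"
proof (rule field_le_epsilon)
  fix \<delta> :: real assume \<delta>: "0 < \<delta>"
  define \<epsilon> where "\<epsilon> = \<delta> / (2 * (real n + 1))"
  have \<epsilon>: "\<epsilon> > 0" using \<delta> by (simp add: \<epsilon>_def)
  have tm: "\<And>i j. i \<le> j \<Longrightarrow> j \<le> n \<Longrightarrow> t i \<le> t j" using t_mono[OF tinc] by blast
  have T0: "0 \<le> T" using tm[of 0 n] t0 tn by simp
  define g where "g j = f (t j)" for j
  have "\<forall>j. \<exists>u. j < n \<longrightarrow> t j < u \<and> u \<le> t (Suc j) \<and>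
        (g j < g (Suc j) \<longrightarrow> g (Suc j) \<le> W u + \<epsilon>) \<and> (g (Suc j) < g j \<longrightarrow> W u - \<epsilon> \<le> g (Suc j))"
  proof
    fix j
    show "\<exists>u. j < n \<longrightarrow> t j < u \<and> u \<le> t (Suc j) \<and>
        (g j < g (Suc j) \<longrightarrow> g (Suc j) \<le> W u + \<epsilon>) \<and> (g (Suc j) < g j \<longrightarrow> W u - \<epsilon> \<le> g (Suc j))"
    proof (cases "j < n")
      case True
      consider "g j < g (Suc j)" | "g (Suc j) < g j" | "g j = g (Suc j)" by linarith
      then show ?thesis
      proof cases
        case 1
        then obtain u where "t j < u \<and> u \<le> t (Suc j) \<and> f (t (Suc j)) \<le> W u + \<epsilon>"
          using H[OF True \<epsilon>] by (auto simp: g_def)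
        then show ?thesis using 1 by (intro exI[of _ u]) (auto simp: g_def)
      next
        case 2
        then obtain u where "t j < u \<and> u \<le> t (Suc j) \<and> W u - \<epsilon> \<le> f (t (Suc j))"
          using H[OF True \<epsilon>] by (auto simp: g_def)
        then show ?thesis using 2 by (intro exI[of _ u]) (auto simp: g_def)
      next
        case 3
        then show ?thesis using tinc True by (intro exI[of _ "t (Suc j)"]) auto
      qed
    qed simp
  qed
  then obtain u where u: "\<And>j. j < n \<Longrightarrow> t j < u j \<and> u j \<le> t (Suc j) \<and>
        (g j < g (Suc j) \<longrightarrow> g (Suc j) \<le> W (u j) + \<epsilon>) \<and> (g (Suc j) < g j \<longrightarrow> W (u j) - \<epsilon> \<le> g (Suc j))"
    by metis
  define C where "C j = (if g j < g (Suc j) then W (u j) + \<epsilon> else W (u j) - \<epsilon>)" for j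
  have Cw: "\<bar>C j - W (u j)\<bar> \<le> \<epsilon>" for j using \<epsilon> by (simp add: C_def)
  have hyp: "\<forall>j<n. (g j < g (Suc j) \<longrightarrow> g (Suc j) \<le> C j) \<and> (g (Suc j) < g j \<longrightarrow> C j \<le> g (Suc j))"
    using u by (auto simp: C_def)
  obtain m e js where ch: "m \<le> n" "e 0 = g 0" "\<forall>s. 1 \<le> s \<and> s \<le> m \<longrightarrow> e s = C (js s) \<and> js s < n"
     "\<forall>s. 1 \<le> s \<and> s < m \<longrightarrow> js s < js (Suc s)" "Gs p g n \<le> Gs p e m"
    using exact_chain[OF p hyp] by blast
  have e0: "e 0 = 0" using ch(2) t0 f0 by (simp add: g_def)
  define q where "q s = (if s = 0 then 0 else u (js s))" for s :: nat
  have eq: "\<bar>e s - W (q s)\<bar> \<le> \<epsilon>" if "1 \<le> s" "s \<le> m" for s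
    using ch(3) that Cw by (auto simp: q_def)
  define A where "A s = \<bar>W (q (Suc s)) - W (q s)\<bar>" for s :: nat
  define B where "B s = (if s = 0 then \<bar>W 0\<bar> else 0)" for s :: nat
  define E where "E s = 2 * \<epsilon>" for s :: nat
  have step: "\<bar>e (Suc s) - e s\<bar> \<le> (A s + B s) + E s" if "s < m" for s
  proof (cases "s = 0")
    case True
    have "\<bar>e 1 - W (q 1)\<bar> \<le> \<epsilon>" using eq[of 1] that True by simp
    then show ?thesis using True e0 \<epsilon> by (simp add: A_def B_def E_def q_def)
  next
    case False
    have "\<bar>e (Suc s) - W (q (Suc s))\<bar> \<le> \<epsilon>" "\<bar>e s - W (q s)\<bar> \<le> \<epsilon>" using eq that False by auto
    then show ?thesis using False by (simp add: A_def B_def E_def)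
  qed
  have qmono: "\<forall>s<m. q s \<le> q (Suc s)"
  proof (intro allI impI)
    fix s assume s: "s < m"
    have js1: "js (Suc s) < n" using ch(3) s by auto
    show "q s \<le> q (Suc s)"
    proof (cases "s = 0")
      case True
      have "t 0 \<le> t (js 1)" using tm[of 0 "js (Suc s)"] js1 True by simp
      then show ?thesis using True u[OF js1] t0 by (simp add: q_def)
    next
      case False
      have jss: "js s < js (Suc s)" "js s < n" using ch(3,4) s False by auto
      have "u (js s) \<le> t (Suc (js s))" using u[OF jss(2)] by simp
      also have "\<dots> \<le> t (js (Suc s))" using tm jss js1 by simp
      also have "\<dots> < u (js (Suc s))" using u[OF js1] by simp
      finally show ?thesis using False by (simp add: q_def)
    qed
  qed
  have qT: "q m \<le> T"
  proof (cases "m = 0")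
    case True then show ?thesis using T0 by (simp add: q_def)
  next
    case False
    then have jm: "js m < n" using ch(3) by auto
    have "u (js m) \<le> t (Suc (js m))" using u[OF jm] by simp
    also have "\<dots> \<le> T" using tm[of "Suc (js m)" n] jm tn by simp
    finally show ?thesis using False by (simp add: q_def)
  qed
  have nA: "nrm p A m \<le> V" unfolding A_def using HB[of q m] qmono qT by (simp add: q_def)
  have nB: "nrm p B m \<le> \<bar>W 0\<bar>"
  proof -
    have "(\<Sum>s<m. B s powr p) \<le> \<bar>W 0\<bar> powr p"
    proof (cases m)
      case 0 then show ?thesis by simp
    next
      case (Suc m')
      have "(\<Sum>s<m. B s powr p) = (\<Sum>s<Suc m'. B s powr p)" using Suc by simp
      also have "\<dots> = B 0 powr p" by (subst sum.lessThan_Suc_shift) (simp add: B_def)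
      finally show ?thesis by (simp add: B_def)
    qed
    then show ?thesis using nrm_le_iff p by simp
  qed
  have nE: "nrm p E m \<le> 2 * \<epsilon> * real n"
  proof -
    have "(\<Sum>s<m. E s powr p) = real m * (2*\<epsilon>) powr p" by (simp add: E_def)
    also have "\<dots> \<le> real m powr p * (2*\<epsilon>) powr p"
    proof (cases "m = 0")
      case True then show ?thesis by simp
    next
      case False
      then have "real m powr 1 \<le> real m powr p" using p by (intro powr_mono) auto
      then show ?thesis using False by (intro mult_right_mono) auto
    qed
    also have "\<dots> = (2 * \<epsilon> * real m) powr p" using \<epsilon> by (simp add: powr_mult mult.commute)
    also have "\<dots> \<le> (2 * \<epsilon> * real n) powr p" using \<epsilon> ch(1) p by (intro powr_mono2) auto
    finally show ?thesis using nrm_le_iff[of p "2 * \<epsilon> * real n" E m] p \<epsilon> by simp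
  qed
  have 1: "nrm p (\<lambda>j. \<bar>f (t (Suc j)) - f (t j)\<bar>) n = Gs p g n powr (1/p)"
    by (simp add: nrm_def Gs_def g_def)
  have 2: "Gs p e m powr (1/p) = nrm p (\<lambda>s. \<bar>e (Suc s) - e s\<bar>) m"
    by (simp add: nrm_def Gs_def)
  have "Gs p g n powr (1/p) \<le> Gs p e m powr (1/p)"
    using ch(5) p by (intro powr_mono2) (auto simp: Gs_def sum_nonneg)
  also have "\<dots> \<le> nrm p (\<lambda>s. A s + B s) m + nrm p E m"
    unfolding 2 using step p \<epsilon> by (intro minkowski_le) (auto simp: A_def B_def E_def)
  also have "\<dots> \<le> (nrm p A m + nrm p B m) + nrm p E m"
    using minkowski[of m A B p] p by (simp add: A_def B_def)
  also have "\<dots> \<le> (V + \<bar>W 0\<bar>) + 2 * \<epsilon> * real n"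
    using nA nB nE by linarith
  also have "2 * \<epsilon> * real n \<le> \<delta>"
    using \<delta> by (simp add: \<epsilon>_def field_simps)
  finally show "nrm p (\<lambda>j. \<bar>f (t (Suc j)) - f (t j)\<bar>) n \<le> \<bar>W 0\<bar> + V + \<delta>"
    using 1 by linarith
qed



lemma pos_interval:
  fixes F :: "real \<Rightarrow> real"
  assumes mono: "\<And>a b. a \<le> b \<Longrightarrow> F a \<le> F b" and rc: "\<And>a. continuous (at_right a) F"
    and tt: "t < t'" and c: "F t < c" "c < F t'"
  shows "\<exists>J\<in>sets borel. J \<subseteq> {t<..t'} \<and> (\<forall>s\<in>J. c \<le> F s) \<and> 0 < emeasure (interval_measure F) J"
proof -
  define E where "E = {s. t \<le> s \<and> s \<le> t' \<and> c \<le> F s}"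
  define b where "b = Inf E"
  have t'E: "t' \<in> E" using tt c by (simp add: E_def)
  have bdd: "bdd_below E" unfolding E_def by (rule bdd_belowI[of _ t]) auto
  have bt: "t \<le> b" unfolding b_def using t'E by (intro cInf_greatest) (auto simp: E_def)
  have bt': "b \<le> t'" unfolding b_def using t'E bdd by (intro cInf_lower)
  have Ioc: "emeasure (interval_measure F) {u<..v} = ennreal (F v - F u)" if "u \<le> v" for u v
    using emeasure_interval_measure_Ioc[OF that mono rc] by simp
  show ?thesis
  proof (cases "c \<le> F b")
    case True
    then have tb: "t < b" using bt c by (metis le_less not_le)
    define a where "a n = b - (b - t) / (real n + 2)" for n
    have a_lt: "a n < b" for n using tb by (simp add: a_def)
    have a_ge: "t \<le> a n" for n
    proof -
      have "(b - t) / (real n + 2) \<le> (b - t)" using tb by (simp add: divide_le_eq)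
      then show ?thesis by (simp add: a_def)
    qed
    have Fa: "F (a n) < c" for n
    proof (rule ccontr)
      assume "\<not> F (a n) < c"
      moreover have "a n \<le> t'" using a_lt[of n] bt' by linarith
      ultimately have "a n \<in> E" using a_ge by (auto simp: E_def)
      then have "b \<le> a n" unfolding b_def using bdd by (rule cInf_lower)
      then show False using a_lt[of n] by simp
    qed
    define A where "A n = {a n<..t'}" for n
    have dec: "decseq A"
    proof (rule decseq_SucI)
      fix n
      have "(b - t) / (real (Suc n) + 2) \<le> (b - t) / (real n + 2)"
        using tb by (intro divide_left_mono) auto
      then have "a n \<le> a (Suc n)" by (simp add: a_def)
      then show "A (Suc n) \<subseteq> A n" by (auto simp: A_def)
    qed
    have inter: "(\<Inter>n. A n) = {b..t'}"
    proof
      show "{b..t'} \<subseteq> (\<Inter>n. A n)" by (auto simp: A_def) (metis a_lt less_le_trans)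
      show "(\<Inter>n. A n) \<subseteq> {b..t'}"
      proof
        fix s assume s: "s \<in> (\<Inter>n. A n)"
        then have st': "s \<le> t'" by (auto simp: A_def)
        have "b \<le> s"
        proof (rule ccontr)
          assume "\<not> b \<le> s"
          then have d: "0 < b - s" by simp
          obtain n where n: "(b - t) / (b - s) < real n" using reals_Archimedean2 by blast
          then have "(b - t) < real n * (b - s)" using d by (simp add: divide_less_eq)
          then have "(b - t) < (real n + 2) * (b - s)" using d by (smt (verit, ccfv_SIG) mult_right_mono of_nat_0_le_iff)
          then have "(b - t) / (real n + 2) < b - s" by (simp add: divide_less_eq add_pos_nonneg mult.commute)
          then have "s < a n" by (simp add: a_def)
          moreover have "s \<in> A n" using s by auto
          ultimately show False by (simp add: A_def)
        qed
        then show "s \<in> {b..t'}" using st' by simp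
      qed
    qed
    have a_le: "a n \<le> t'" for n using a_lt[of n] bt' by linarith
    have fin: "emeasure (interval_measure F) (A n) \<noteq> \<infinity>" for n
      using a_le[of n] by (simp add: A_def Ioc)
    have "(INF n. emeasure (interval_measure F) (A n)) = emeasure (interval_measure F) (\<Inter>n. A n)"
      by (rule INF_emeasure_decseq[OF _ dec fin]) (auto simp: A_def)
    moreover have "ennreal (F t' - c) \<le> (INF n. emeasure (interval_measure F) (A n))"
    proof (rule INF_greatest)
      fix n
      have "a n \<le> t'" using a_lt bt' by (meson less_imp_le order.trans)
      then have "emeasure (interval_measure F) (A n) = ennreal (F t' - F (a n))" by (simp add: A_def Ioc)
      then show "ennreal (F t' - c) \<le> emeasure (interval_measure F) (A n)" using Fa[of n]
        by (simp add: ennreal_leI)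
    qed
    ultimately have "ennreal (F t' - c) \<le> emeasure (interval_measure F) {b..t'}" using inter by simp
    moreover have "0 < ennreal (F t' - c)" using c by simp
    ultimately have pos: "0 < emeasure (interval_measure F) {b..t'}" by (rule less_le_trans[rotated])
    have "\<forall>s\<in>{b..t'}. c \<le> F s" using True mono by (auto intro: order.trans)
    moreover have "{b..t'} \<subseteq> {t<..t'}" using tb by auto
    ultimately show ?thesis using pos by (intro bexI[of _ "{b..t'}"]) auto
  next
    case False
    then have bt'': "b < t'" using bt' c by (metis le_less not_le order.strict_trans) 
    have "\<forall>s\<in>{b<..t'}. c \<le> F s"
    proof
      fix s assume "s \<in> {b<..t'}"
      then have "Inf E < s" by (simp add: b_def)
      then obtain e where "e \<in> E" "e < s" using cInf_less_iff[of E s] t'E bdd by auto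
      then show "c \<le> F s" using mono[of e s] by (auto simp: E_def)
    qed
    moreover have "0 < emeasure (interval_measure F) {b<..t'}"
      using Ioc[of b t'] bt'' False c by simp
    moreover have "{b<..t'} \<subseteq> {t<..t'}" using bt by auto
    ultimately show ?thesis by (intro bexI[of _ "{b<..t'}"]) auto
  qed
qed



lemma hit:
  fixes l y x k :: "real \<Rightarrow> real^'n"
  assumes SP: "SP l y x k" and t: "0 \<le> t" "t < t'" and inc: "k t $ i < k t' $ i" and \<epsilon>: "\<epsilon> > 0"
  shows "\<exists>u. t < u \<and> u \<le> t' \<and> k t' $ i \<le> l u $ i - y u $ i + \<epsilon>"
proof (rule ccontr)
  assume nh: "\<not> ?thesis"
  have t'0: "0 \<le> t'" using t by simp
  have cad: "cadlag k" and xyk: "\<forall>s\<ge>0. x s = y s + k s \<and> (\<forall>j. l s $ j \<le> x s $ j)"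
    and mono: "mono_on {0..} (\<lambda>s. k s $ i)"
    and int: "(\<integral>\<^sup>+ s. ennreal (x s $ i - l s $ i) * indicator {0<..t'} s
          \<partial>(interval_measure (\<lambda>s. k (max s 0) $ i))) = 0"
    using SP t'0 unfolding SP_def by auto
  define F where "F = (\<lambda>s. k (max s 0) $ i)"
  have Fm: "F a \<le> F b" if "a \<le> b" for a b
    using mono that unfolding F_def by (intro mono_onD[OF mono]) auto
  have Frc: "continuous (at_right a) F" for a
  proof (cases "a < 0")
    case True
    have "eventually (\<lambda>s. F s = F a) (at_right a)"
      unfolding eventually_at_right_field using True
      by (intro exI[of _ 0]) (auto simp: F_def)
    then show ?thesis unfolding continuous_within by (rule tendsto_eventually)
  next
    case False
    have "((\<lambda>s. k s $ i) \<longlongrightarrow> k a $ i) (at_right a)"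
      using cad False unfolding cadlag_def by (auto intro: tendsto_vec_nth)
    moreover have "eventually (\<lambda>s. k s $ i = F s) (at_right a)"
      using eventually_at_right_less[of a] by eventually_elim (use False in \<open>auto simp: F_def\<close>)
    ultimately have "(F \<longlongrightarrow> k a $ i) (at_right a)" by (rule Lim_transform_eventually)
    then show ?thesis using False unfolding continuous_within F_def by simp
  qed
  define c where "c = max (k t' $ i - \<epsilon>/2) ((k t $ i + k t' $ i)/2)"
  have Ft: "F t = k t $ i" "F t' = k t' $ i" using t by (auto simp: F_def)
  have m1: "k t $ i < (k t $ i + k t' $ i)/2" "(k t $ i + k t' $ i)/2 < k t' $ i" using inc by auto
  have c: "F t < c" "c < F t'" using m1 \<epsilon> Ft unfolding c_def by (auto simp: less_max_iff_disj)
  obtain J where J: "J \<in> sets borel" "J \<subseteq> {t<..t'}" "\<forall>s\<in>J. c \<le> F s" "0 < emeasure (interval_measure F) J"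
    using pos_interval[of F t t' c, OF Fm Frc t(2) c] by blast
  have pos: "ennreal (\<epsilon>/2) \<le> ennreal (x s $ i - l s $ i)" if "s \<in> J" for s
  proof -
    have s: "t < s" "s \<le> t'" "0 \<le> s" using J that t by auto
    have "l s $ i - y s $ i < k t' $ i - \<epsilon>" using nh s by force
    moreover have "x s $ i = y s $ i + k s $ i" using xyk s by auto
    moreover have "c \<le> k s $ i" using J that s by (auto simp: F_def)
    ultimately have "\<epsilon>/2 \<le> x s $ i - l s $ i" by (auto simp: c_def)
    then show ?thesis by (rule ennreal_leI)
  qed
  have "ennreal (\<epsilon>/2) * emeasure (interval_measure F) J = (\<integral>\<^sup>+ s. ennreal (\<epsilon>/2) * indicator J s \<partial>interval_measure F)"
    using J by (simp add: nn_integral_cmult_indicator)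
  also have "\<dots> \<le> (\<integral>\<^sup>+ s. ennreal (x s $ i - l s $ i) * indicator {0<..t'} s \<partial>interval_measure F)"
  proof (rule nn_integral_mono)
    fix s
    show "ennreal (\<epsilon>/2) * indicator J s \<le> ennreal (x s $ i - l s $ i) * indicator {0<..t'} s"
    proof (cases "s \<in> J")
      case True
      then have "s \<in> {0<..t'}" using J t by auto
      then show ?thesis using True pos[OF True] by simp
    next
      case False then show ?thesis by simp
    qed
  qed
  also have "\<dots> = 0" using int by (simp add: F_def)
  finally have "ennreal (\<epsilon>/2) * emeasure (interval_measure F) J \<le> 0" .
  moreover have "0 < ennreal (\<epsilon>/2) * emeasure (interval_measure F) J"
    using J(4) \<epsilon> by (simp add: ennreal_zero_less_mult_iff)
  ultimately show False by (meson leD)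
qed



lemma SP_facts:
  fixes l y x k :: "real \<Rightarrow> real^'n"
  assumes "SP l y x k"
  shows "k 0 = 0" "\<And>u. 0 \<le> u \<Longrightarrow> l u $ i - y u $ i \<le> k u $ i"
    "\<And>a b. 0 \<le> a \<Longrightarrow> a \<le> b \<Longrightarrow> k a $ i \<le> k b $ i"
    "\<And>u. 0 \<le> u \<Longrightarrow> x u = y u + k u"
proof -
  show "k 0 = 0" using assms by (simp add: SP_def)
  show "\<And>u. 0 \<le> u \<Longrightarrow> x u = y u + k u" using assms by (simp add: SP_def)
  show "l u $ i - y u $ i \<le> k u $ i" if "0 \<le> u" for u
  proof -
    have "x u = y u + k u" "l u $ i \<le> x u $ i" using assms that by (auto simp: SP_def)
    then show ?thesis by simp
  qed
  show "k a $ i \<le> k b $ i" if "0 \<le> a" "a \<le> b" for a b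
  proof -
    have mo: "mono_on {0..} (\<lambda>s. k s $ i)" using assms by (simp add: SP_def)
    show ?thesis using mono_onD[OF mo, of a b] that by simp
  qed
qed

lemma compH:
  fixes l y x k l' y' x' k' :: "real \<Rightarrow> real^'n" and i :: 'n
  assumes S1: "SP l y x k" and S2: "SP l' y' x' k'" and ab: "0 \<le> a" "a < b" and \<epsilon>: "\<epsilon> > 0"
  defines "f \<equiv> \<lambda>s. k s $ i - k' s $ i"
    and "W \<equiv> \<lambda>s. (l s $ i - y s $ i) - (l' s $ i - y' s $ i)"
  shows "(f a < f b \<longrightarrow> (\<exists>u. a < u \<and> u \<le> b \<and> f b \<le> W u + \<epsilon>)) \<and>
         (f b < f a \<longrightarrow> (\<exists>u. a < u \<and> u \<le> b \<and> W u - \<epsilon> \<le> f b))"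
proof (intro conjI impI)
  assume up: "f a < f b"
  have "k' a $ i \<le> k' b $ i" using SP_facts(3)[OF S2] ab by simp
  then have "k a $ i < k b $ i" using up by (simp add: f_def)
  then obtain u where u: "a < u" "u \<le> b" "k b $ i \<le> l u $ i - y u $ i + \<epsilon>"
    using hit[OF S1 ab(1) ab(2) _ \<epsilon>] by blast
  have "l' u $ i - y' u $ i \<le> k' u $ i" using SP_facts(2)[OF S2] u ab by simp
  moreover have "k' u $ i \<le> k' b $ i" using SP_facts(3)[OF S2] u ab by simp
  ultimately have "f b \<le> W u + \<epsilon>" using u by (simp add: f_def W_def)
  then show "\<exists>u. a < u \<and> u \<le> b \<and> f b \<le> W u + \<epsilon>" using u by blast
next
  assume dn: "f b < f a"
  have "k a $ i \<le> k b $ i" using SP_facts(3)[OF S1] ab by simp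
  then have "k' a $ i < k' b $ i" using dn by (simp add: f_def)
  then obtain u where u: "a < u" "u \<le> b" "k' b $ i \<le> l' u $ i - y' u $ i + \<epsilon>"
    using hit[OF S2 ab(1) ab(2) _ \<epsilon>] by blast
  have "l u $ i - y u $ i \<le> k u $ i" using SP_facts(2)[OF S1] u ab by simp
  moreover have "k u $ i \<le> k b $ i" using SP_facts(3)[OF S1] u ab by simp
  ultimately have "W u - \<epsilon> \<le> f b" using u by (simp add: f_def W_def)
  then show "\<exists>u. a < u \<and> u \<le> b \<and> W u - \<epsilon> \<le> f b" using u by blast
qed

lemma nrm_of_chs:
  assumes "p > 0" "V \<ge> 0" "chs p g q N \<le> V powr p"
  shows "nrm p (\<lambda>s. norm (g (q (Suc s)) - g (q s))) N \<le> V"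
  using assms nrm_le_iff[of p V "\<lambda>s. norm (g (q (Suc s)) - g (q s))" N] by (simp add: chs_def)

lemma Vp_real_nonneg: "Vp p g a b = ereal V \<Longrightarrow> 0 \<le> V"
  by (auto simp: Vp_def split: if_splits)

theorem theorem2:
  fixes p :: real and T :: real
    and l y l' y' x k x' k' :: "real \<Rightarrow> real^'n"
  assumes "p \<ge> 1" and "T \<ge> 0"
    and "cadlag l" "cadlag y" "cadlag l'" "cadlag y'"
    and "\<forall>i. l 0 $ i \<le> y 0 $ i" and "\<forall>i. l' 0 $ i \<le> y' 0 $ i"
    and "SP l y x k" and "SP l' y' x' k'"
  shows "(Vp p (\<lambda>t. x t - x' t) 0 T \<le>
           ereal (real CARD('n) + 1) * Vp p (\<lambda>t. y t - y' t) 0 T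
           + ereal (real CARD('n) * norm (y 0 - y' 0))
           + ereal (real CARD('n)) * Vp p (\<lambda>t. l t - l' t) 0 T
           + ereal (real CARD('n) * norm (l 0 - l' 0))) \<and>
         (Vp p (\<lambda>t. k t - k' t) 0 T \<le>
           ereal (real CARD('n)) * Vp p (\<lambda>t. y t - y' t) 0 T
           + ereal (real CARD('n) * norm (y 0 - y' 0))
           + ereal (real CARD('n)) * Vp p (\<lambda>t. l t - l' t) 0 T
           + ereal (real CARD('n) * norm (l 0 - l' 0)))"
proof -
  note p = assms(1) and T0 = assms(2) and S1 = assms(9) and S2 = assms(10)
  have p0: "p > 0" using p by simp
  define d where "d = real CARD('n)"
  have d0: "d > 0" by (simp add: d_def)
  show ?thesis
  proof (cases "Vp p (\<lambda>t. y t - y' t) 0 T = \<infinity> \<or> Vp p (\<lambda>t. l t - l' t) 0 T = \<infinity>")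
    case True
    then show ?thesis
    proof
      assume h: "Vp p (\<lambda>t. y t - y' t) 0 T = \<infinity>"
      show ?thesis unfolding h using d0 by (simp add: d_def[symmetric])
    next
      assume h: "Vp p (\<lambda>t. l t - l' t) 0 T = \<infinity>"
      show ?thesis unfolding h using d0 by (simp add: d_def[symmetric])
    qed
  next
    case False
    then obtain Vy Vl where Vy: "Vp p (\<lambda>t. y t - y' t) 0 T = ereal Vy" and Vl: "Vp p (\<lambda>t. l t - l' t) 0 T = ereal Vl"
      using Vp_cases by metis
    have Vy0: "0 \<le> Vy" and Vl0: "0 \<le> Vl" using Vy Vl Vp_real_nonneg by blast+
    define dy where "dy = norm (y 0 - y' 0)"
    define dl where "dl = norm (l 0 - l' 0)"
    define B2 where "B2 = d * (Vy + dy + Vl + dl)"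
    have B20: "0 \<le> B2" using d0 Vy0 Vl0 by (simp add: B2_def dy_def dl_def)
    have chY: "nrm p (\<lambda>s. norm ((y (q (Suc s)) - y' (q (Suc s))) - (y (q s) - y' (q s)))) N \<le> Vy"
      if "q 0 = 0" "\<forall>s<N. q s \<le> q (Suc s)" "q N \<le> T" for q N
      using nrm_of_chs[OF p0 Vy0 Vp_chain[OF p0 T0 Vy that]] by simp
    have chL: "nrm p (\<lambda>s. norm ((l (q (Suc s)) - l' (q (Suc s))) - (l (q s) - l' (q s)))) N \<le> Vl"
      if "q 0 = 0" "\<forall>s<N. q s \<le> q (Suc s)" "q N \<le> T" for q N
      using nrm_of_chs[OF p0 Vl0 Vp_chain[OF p0 T0 Vl that]] by simp
    have NK: "nrm p (\<lambda>j. norm ((k (t (Suc j)) - k' (t (Suc j))) - (k (t j) - k' (t j)))) n \<le> B2"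
      if t: "t 0 = 0" "t n = T" "\<forall>i<n. t i < t (Suc i)" for t n
    proof -
      have tm: "\<And>i j. i \<le> j \<Longrightarrow> j \<le> n \<Longrightarrow> t i \<le> t j" using t_mono[OF t(3)] by blast
      have tpos: "0 \<le> t j" if "j \<le> n" for j using tm[of 0 j] that t(1) by simp
      define f where "f i s = k s $ i - k' s $ i" for i s
      define W where "W i s = (l s $ i - y s $ i) - (l' s $ i - y' s $ i)" for i s
      have CEi: "nrm p (\<lambda>j. \<bar>f i (t (Suc j)) - f i (t j)\<bar>) n \<le> \<bar>W i 0\<bar> + (Vl + Vy)" for i
      proof (rule CE[OF p t(1) t(2) t(3)])
        show "f i 0 = 0" using SP_facts(1)[OF S1] SP_facts(1)[OF S2] by (simp add: f_def)
        show "0 \<le> Vl + Vy" using Vl0 Vy0 by simp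
        fix j :: nat and \<epsilon> :: real
        show "(f i (t j) < f i (t (Suc j)) \<longrightarrow> (\<exists>u. t j < u \<and> u \<le> t (Suc j) \<and> f i (t (Suc j)) \<le> W i u + \<epsilon>)) \<and>
              (f i (t (Suc j)) < f i (t j) \<longrightarrow> (\<exists>u. t j < u \<and> u \<le> t (Suc j) \<and> W i u - \<epsilon> \<le> f i (t (Suc j))))"
          if "j < n" "\<epsilon> > 0"
          using compH[OF S1 S2 tpos[of j] _ that(2), of "t (Suc j)" i] t(3) that(1)
          unfolding f_def W_def by simp
      next
        fix q N assume q: "q 0 = 0" "\<forall>s<N. q s \<le> q (Suc s)" "q N \<le> T"
        have "nrm p (\<lambda>s. \<bar>W i (q (Suc s)) - W i (q s)\<bar>) N
           \<le> nrm p (\<lambda>s. norm ((l (q (Suc s)) - l' (q (Suc s))) - (l (q s) - l' (q s)))) N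
            + nrm p (\<lambda>s. norm ((y (q (Suc s)) - y' (q (Suc s))) - (y (q s) - y' (q s)))) N"
        proof (rule minkowski_le[OF _ p], intro allI impI conjI)
          fix s
          let ?L = "(l (q (Suc s)) - l' (q (Suc s))) - (l (q s) - l' (q s))"
          let ?Y = "(y (q (Suc s)) - y' (q (Suc s))) - (y (q s) - y' (q s))"
          have "W i (q (Suc s)) - W i (q s) = ?L $ i - ?Y $ i" by (simp add: W_def)
          then have "\<bar>W i (q (Suc s)) - W i (q s)\<bar> \<le> \<bar>?L $ i\<bar> + \<bar>?Y $ i\<bar>" by simp
          also have "\<dots> \<le> norm ?L + norm ?Y" by (intro add_mono component_le_norm_cart)
          finally show "\<bar>W i (q (Suc s)) - W i (q s)\<bar> \<le> norm ?L + norm ?Y" .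
        qed auto
        also have "\<dots> \<le> Vl + Vy" using chL[OF q] chY[OF q] by linarith
        finally show "nrm p (\<lambda>s. \<bar>W i (q (Suc s)) - W i (q s)\<bar>) N \<le> Vl + Vy" .
      qed
      have W0: "\<bar>W i 0\<bar> \<le> dl + dy" for i
      proof -
        have "W i 0 = (l 0 - l' 0) $ i - (y 0 - y' 0) $ i" by (simp add: W_def)
        then have "\<bar>W i 0\<bar> \<le> \<bar>(l 0 - l' 0) $ i\<bar> + \<bar>(y 0 - y' 0) $ i\<bar>" by simp
        also have "\<dots> \<le> dl + dy" unfolding dl_def dy_def by (intro add_mono component_le_norm_cart)
        finally show ?thesis .
      qed
      have "nrm p (\<lambda>j. norm ((k (t (Suc j)) - k' (t (Suc j))) - (k (t j) - k' (t j)))) n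
          \<le> nrm p (\<lambda>j. \<Sum>i\<in>UNIV. \<bar>f i (t (Suc j)) - f i (t j)\<bar>) n"
      proof (rule nrm_mono[OF _ p0], intro allI impI conjI)
        fix j
        show "norm ((k (t (Suc j)) - k' (t (Suc j))) - (k (t j) - k' (t j))) \<le> (\<Sum>i\<in>UNIV. \<bar>f i (t (Suc j)) - f i (t j)\<bar>)"
          using norm_le_l1_cart[of "(k (t (Suc j)) - k' (t (Suc j))) - (k (t j) - k' (t j))"]
          by (simp add: f_def)
      qed simp
      also have "\<dots> \<le> (\<Sum>i\<in>UNIV. nrm p (\<lambda>j. \<bar>f i (t (Suc j)) - f i (t j)\<bar>) n)"
        by (rule minkowski_sum[OF _ _ p]) auto
      also have "\<dots> \<le> (\<Sum>i\<in>(UNIV::'n set). (dl + dy) + (Vl + Vy))"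
        by (intro sum_mono) (use CEi W0 in \<open>smt (verit)\<close>)
      also have "\<dots> = B2" by (simp add: B2_def d_def algebra_simps)
      finally show ?thesis .
    qed
    have K: "Vp p (\<lambda>t. k t - k' t) 0 T \<le> ereal B2"
    proof (rule Vp_le[OF p0 T0 B20])
      fix n t assume t: "t 0 = 0" "t n = T" "\<forall>i<n. t i < t (Suc i)"
      have "nrm p (\<lambda>j. norm ((k (t (Suc j)) - k' (t (Suc j))) - (k (t j) - k' (t j)))) n \<le> B2"
        using NK[OF t] .
      then show "chs p (\<lambda>t. k t - k' t) t n \<le> B2 powr p"
        using nrm_le_iff[OF p0 B20] by (simp add: chs_def)
    qed
    have X: "Vp p (\<lambda>t. x t - x' t) 0 T \<le> ereal (Vy + B2)"
    proof (rule Vp_le[OF p0 T0])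
      show "0 \<le> Vy + B2" using Vy0 B20 by simp
      fix n t assume t: "t 0 = 0" "t n = T" "\<forall>i<n. t i < t (Suc i)"
      have tm: "\<And>i j. i \<le> j \<Longrightarrow> j \<le> n \<Longrightarrow> t i \<le> t j" using t_mono[OF t(3)] by blast
      have tpos: "0 \<le> t j" if "j \<le> n" for j using tm[of 0 j] that t(1) by simp
      have "nrm p (\<lambda>j. norm ((x (t (Suc j)) - x' (t (Suc j))) - (x (t j) - x' (t j)))) n
         \<le> nrm p (\<lambda>j. norm ((y (t (Suc j)) - y' (t (Suc j))) - (y (t j) - y' (t j)))) n
          + nrm p (\<lambda>j. norm ((k (t (Suc j)) - k' (t (Suc j))) - (k (t j) - k' (t j)))) n"
      proof (rule minkowski_le[OF _ p], intro allI impI conjI)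
        fix j assume j: "j < n"
        have "(x (t (Suc j)) - x' (t (Suc j))) - (x (t j) - x' (t j))
            = ((y (t (Suc j)) - y' (t (Suc j))) - (y (t j) - y' (t j))) + ((k (t (Suc j)) - k' (t (Suc j))) - (k (t j) - k' (t j)))"
          using SP_facts(4)[OF S1] SP_facts(4)[OF S2] tpos[of j] tpos[of "Suc j"] j by (simp add: algebra_simps)
        then show "norm ((x (t (Suc j)) - x' (t (Suc j))) - (x (t j) - x' (t j)))
           \<le> norm ((y (t (Suc j)) - y' (t (Suc j))) - (y (t j) - y' (t j))) + norm ((k (t (Suc j)) - k' (t (Suc j))) - (k (t j) - k' (t j)))"
          by (metis norm_triangle_ineq)
      qed auto
      also have "\<dots> \<le> Vy + B2" using chY[of t n] t NK[OF t] tm by (auto intro!: add_mono simp: less_imp_le)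
      finally show "chs p (\<lambda>t. x t - x' t) t n \<le> (Vy + B2) powr p"
        using nrm_le_iff[of p "Vy + B2"] p0 Vy0 B20 by (simp add: chs_def)
    qed
    have e1: "ereal (real CARD('n) + 1) * Vp p (\<lambda>t. y t - y' t) 0 T
           + ereal (real CARD('n) * norm (y 0 - y' 0))
           + ereal (real CARD('n)) * Vp p (\<lambda>t. l t - l' t) 0 T
           + ereal (real CARD('n) * norm (l 0 - l' 0)) = ereal (Vy + B2)"
      unfolding Vy Vl by (simp add: B2_def d_def dy_def dl_def algebra_simps)
    have e2: "ereal (real CARD('n)) * Vp p (\<lambda>t. y t - y' t) 0 T
           + ereal (real CARD('n) * norm (y 0 - y' 0))
           + ereal (real CARD('n)) * Vp p (\<lambda>t. l t - l' t) 0 T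
           + ereal (real CARD('n) * norm (l 0 - l' 0)) = ereal B2"
      unfolding Vy Vl by (simp add: B2_def d_def dy_def dl_def algebra_simps)
    show ?thesis unfolding e1 e2 using X K by simp
  qed
qed


end
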